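(* Let $G=(V,E)$ be a connected simple graph and let $R_{u,v}$ denote the effective resistance between $u$ and $v$ in the network $\mathcal{N}_G$. Then for every edge $uv\in E$, $$R_{u,v}\le \frac{1}{\tfrac12|N(u)\cap N(v)|+1}.$$ Moreover, if some biconnected component of $G$ is not a clique, then there is an edge $uv\in E$ for which this inequality is strict.
   Context: $\mathcal{N}_G$ is the electrical network on vertex set $V$ in which every edge of $G$ is a resistor of resistance $1$; the effective resistance $R_{u,v}$ is the voltage difference between $u$ and $v$ when a unit current is injected at $u$ and extracted at $v$. $N(u)=\{v\in V: uv\in E\}$ is the open neighbourhood of $u$. A biconnected component (block) of $G$ is a maximal connected subgraph of $G$ that has no cut vertex of its own. *)

theory Defs
  imports Main "HOL-Library.Transitive_Closure_Table" Complex_Main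
begin

definition simple_graph :: "'a set \<Rightarrow> ('a \<Rightarrow> 'a \<Rightarrow> bool) \<Rightarrow> bool" where
  "simple_graph V E \<longleftrightarrow> finite V \<and> (\<forall>x y. E x y \<longrightarrow> x \<in> V \<and> y \<in> V)
     \<and> (\<forall>x y. E x y \<longrightarrow> E y x) \<and> (\<forall>x. \<not> E x x)"

definition connected_on :: "('a \<Rightarrow> 'a \<Rightarrow> bool) \<Rightarrow> 'a set \<Rightarrow> bool" where
  "connected_on E S \<longleftrightarrow>
     (\<forall>x\<in>S. \<forall>y\<in>S. (\<lambda>a b. E a b \<and> a \<in> S \<and> b \<in> S)\<^sup>*\<^sup>* x y)"

definition nbhd :: "'a set \<Rightarrow> ('a \<Rightarrow> 'a \<Rightarrow> bool) \<Rightarrow> 'a \<Rightarrow> 'a set" where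
  "nbhd V E u = {v \<in> V. E u v}"

text \<open>Potential (voltage) phi in the unit-resistor network when a unit current is
injected at u and extracted at v: Kirchhoff's current law with Ohm's law
(current on edge w->x equals phi w - phi x).\<close>
definition unit_potential ::
  "'a set \<Rightarrow> ('a \<Rightarrow> 'a \<Rightarrow> bool) \<Rightarrow> 'a \<Rightarrow> 'a \<Rightarrow> ('a \<Rightarrow> real) \<Rightarrow> bool" where
  "unit_potential V E u v phi \<longleftrightarrow>
     (\<forall>w\<in>V. (\<Sum>x\<in>nbhd V E w. phi w - phi x) =
              (if w = u then 1 else if w = v then -1 else 0))"

definition eff_res :: "'a set \<Rightarrow> ('a \<Rightarrow> 'a \<Rightarrow> bool) \<Rightarrow> 'a \<Rightarrow> 'a \<Rightarrow> real" where
  "eff_res V E u v = (THE r. \<exists>phi. unit_potential V E u v phi \<and> r = phi u - phi v)"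

definition no_cut_vertex :: "('a \<Rightarrow> 'a \<Rightarrow> bool) \<Rightarrow> 'a set \<Rightarrow> bool" where
  "no_cut_vertex E B \<longleftrightarrow> (\<forall>w\<in>B. connected_on E (B - {w}))"

text \<open>Biconnected component (block), given by its vertex set (blocks are induced).\<close>
definition is_block :: "'a set \<Rightarrow> ('a \<Rightarrow> 'a \<Rightarrow> bool) \<Rightarrow> 'a set \<Rightarrow> bool" where
  "is_block V E B \<longleftrightarrow> B \<noteq> {} \<and> B \<subseteq> V \<and> connected_on E B \<and> no_cut_vertex E B \<and>
     (\<forall>B'. B \<subset> B' \<and> B' \<subseteq> V \<longrightarrow> \<not> (connected_on E B' \<and> no_cut_vertex E B'))"

definition is_clique :: "('a \<Rightarrow> 'a \<Rightarrow> bool) \<Rightarrow> 'a set \<Rightarrow> bool" where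
  "is_clique E B \<longleftrightarrow> (\<forall>x\<in>B. \<forall>y\<in>B. x \<noteq> y \<longrightarrow> E x y)"

end

theory Submission
  imports Defs "Jordan_Normal_Form.Determinant"
begin


definition lap :: "'a set \<Rightarrow> ('a \<Rightarrow> 'a \<Rightarrow> bool) \<Rightarrow> ('a \<Rightarrow> real) \<Rightarrow> 'a \<Rightarrow> real" where
  "lap V E f x = (\<Sum>y\<in>nbhd V E x. f x - f y)"

lemma sg_fin: "simple_graph V E \<Longrightarrow> finite V" by (simp add: simple_graph_def)
lemma sg_sym: "simple_graph V E \<Longrightarrow> E x y \<Longrightarrow> E y x" by (simp add: simple_graph_def)
lemma sg_irr: "simple_graph V E \<Longrightarrow> \<not> E x x" by (simp add: simple_graph_def)
lemma sg_in: "simple_graph V E \<Longrightarrow> E x y \<Longrightarrow> x \<in> V \<and> y \<in> V" by (simp add: simple_graph_def)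
lemma fin_nbhd: "simple_graph V E \<Longrightarrow> finite (nbhd V E x)"
  by (simp add: simple_graph_def nbhd_def)

lemma swap_sum:
  assumes g: "simple_graph V E"
  shows "(\<Sum>x\<in>V. \<Sum>y\<in>nbhd V E x. F x y) = (\<Sum>x\<in>V. \<Sum>y\<in>nbhd V E x. F y x)"
proof -
  have fin: "finite V" using g by (simp add: simple_graph_def)
  have "(\<Sum>x\<in>V. \<Sum>y\<in>nbhd V E x. F x y) = (\<Sum>x\<in>V. \<Sum>y\<in>{y. y\<in>V \<and> E x y}. F x y)"
    by (simp add: nbhd_def)
  also have "\<dots> = (\<Sum>y\<in>V. \<Sum>x\<in>{x. x\<in>V \<and> E x y}. F x y)"
    by (rule sum.swap_restrict[OF fin fin])
  also have "\<dots> = (\<Sum>y\<in>V. \<Sum>x\<in>nbhd V E y. F x y)"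
    using sg_sym[OF g] unfolding nbhd_def by (intro sum.cong refl) blast+
  finally show ?thesis .
qed

lemma sum_lap: "simple_graph V E \<Longrightarrow> (\<Sum>x\<in>V. lap V E f x) = 0"
proof -
  assume g: "simple_graph V E"
  have "(\<Sum>x\<in>V. lap V E f x) = (\<Sum>x\<in>V. \<Sum>y\<in>nbhd V E x. f x - f y)" by (simp add: lap_def)
  also have "\<dots> = (\<Sum>x\<in>V. \<Sum>y\<in>nbhd V E x. f y - f x)" by (rule swap_sum[OF g])
  also have "\<dots> = - (\<Sum>x\<in>V. \<Sum>y\<in>nbhd V E x. f x - f y)"
    by (simp add: sum_negf[symmetric])
  finally show ?thesis by (simp add: lap_def)
qed

lemma green:
  assumes g: "simple_graph V E"
  shows "(\<Sum>x\<in>V. \<Sum>y\<in>nbhd V E x. (f x - f y) * (h x - h y)) = 2 * (\<Sum>x\<in>V. h x * lap V E f x)"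
proof -
  have "(\<Sum>x\<in>V. \<Sum>y\<in>nbhd V E x. (f x - f y) * (h x - h y))
      = (\<Sum>x\<in>V. \<Sum>y\<in>nbhd V E x. (f x - f y) * h x) - (\<Sum>x\<in>V. \<Sum>y\<in>nbhd V E x. (f x - f y) * h y)"
    by (simp add: right_diff_distrib sum_subtractf)
  also have "(\<Sum>x\<in>V. \<Sum>y\<in>nbhd V E x. (f x - f y) * h y) = (\<Sum>x\<in>V. \<Sum>y\<in>nbhd V E x. (f y - f x) * h x)"
    by (rule swap_sum[OF g])
  also have "\<dots> = - (\<Sum>x\<in>V. \<Sum>y\<in>nbhd V E x. (f x - f y) * h x)"
    by (simp add: sum_negf[symmetric] algebra_simps)
  finally show ?thesis by (simp add: lap_def sum_distrib_left sum_distrib_right mult.commute)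
qed

lemma harmonic_edges:
  assumes g: "simple_graph V E" and h: "\<And>x. x \<in> V \<Longrightarrow> lap V E f x = 0"
  shows "E x y \<Longrightarrow> f x = f y"
proof -
  assume e: "E x y"
  have fin: "finite V" by (rule sg_fin[OF g])
  have "(\<Sum>x\<in>V. \<Sum>y\<in>nbhd V E x. (f x - f y) * (f x - f y)) = 0"
    using green[OF g, of f f] h by simp
  hence "\<forall>x\<in>V. (\<Sum>y\<in>nbhd V E x. (f x - f y) * (f x - f y)) = 0"
    by (subst (asm) sum_nonneg_eq_0_iff[OF fin]) (auto intro: sum_nonneg)
  hence "\<forall>x\<in>V. \<forall>y\<in>nbhd V E x. (f x - f y) * (f x - f y) = 0"
    using fin_nbhd[OF g] by (auto simp: sum_nonneg_eq_0_iff)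
  thus ?thesis using e sg_in[OF g e] by (auto simp: nbhd_def)
qed

lemma harmonic_const:
  assumes g: "simple_graph V E" and c: "connected_on E V"
    and h: "\<And>x. x \<in> V \<Longrightarrow> lap V E f x = 0" and a: "a \<in> V" "b \<in> V"
  shows "f a = f b"
proof -
  have "(\<lambda>x y. E x y \<and> x \<in> V \<and> y \<in> V)\<^sup>*\<^sup>* a b" using c a by (simp add: connected_on_def)
  thus ?thesis
    apply (induction rule: rtranclp_induct)
     apply simp
    by (metis harmonic_edges[OF g h])
qed



lemma lap_expand: "simple_graph V E \<Longrightarrow> lap V E f x = real (card (nbhd V E x)) * f x - (\<Sum>y\<in>V. if E x y then f y else 0)"
  by (simp add: lap_def sum_subtractf sum.inter_filter sg_fin nbhd_def)

lemma exists_solution: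
  assumes g: "simple_graph V E" and c: "connected_on E V" and vV: "v \<in> V"
    and b0: "(\<Sum>x\<in>V. b x) = 0"
  shows "\<exists>f. \<forall>x\<in>V. lap V E f x = b x"
proof -
  have fin: "finite V" by (rule sg_fin[OF g])
  obtain xs where xs: "set xs = V" "distinct xs" using finite_distinct_list[OF fin] by blast
  define n where "n = length xs"
  define ix where "ix x = (SOME i. i < n \<and> xs ! i = x)" for x
  have ix: "ix x < n \<and> xs ! ix x = x" if "x \<in> V" for x
  proof -
    have "\<exists>i. i < n \<and> xs ! i = x" using that xs(1) by (auto simp: n_def in_set_conv_nth)
    thus ?thesis unfolding ix_def by (rule someI_ex)
  qed
  have ixn: "ix (xs ! j) = j" if "j < n" for j
  proof -
    have "xs ! j \<in> V" using that xs(1) n_def by auto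
    from ix[OF this] have "ix (xs!j) < n" "xs ! ix (xs!j) = xs ! j" by auto
    thus ?thesis using xs(2) that n_def nth_eq_iff_index_eq by blast
  qed
  have reidx: "(\<Sum>j\<in>{0..<n}. h (xs ! j)) = (\<Sum>y\<in>V. h y)" for h :: "'a \<Rightarrow> real"
  proof -
    have "bij_betw ((!) xs) {..<n} V" by (rule bij_betw_nth) (use xs n_def in auto)
    hence "(\<Sum>y\<in>V. h y) = (\<Sum>j\<in>{..<n}. h (xs ! j))" by (rule sum.reindex_bij_betw[symmetric])
    thus ?thesis by (simp add: atLeast0LessThan)
  qed
  define M :: "real mat" where "M = mat n n (\<lambda>(i,j). if xs!i = v then (if i = j then 1 else 0)
      else (if i = j then real (card (nbhd V E (xs!i))) else 0) - (if E (xs!i) (xs!j) then 1 else 0))"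
  have Mc: "M \<in> carrier_mat n n" by (simp add: M_def)
  have Mv: "(M *\<^sub>v z) $ i = (if xs!i = v then z $ i else lap V E (\<lambda>x. z $ ix x) (xs!i))"
    if z: "z \<in> carrier_vec n" and i: "i < n" for z i
  proof -
    have dz: "dim_vec z = n" using z by simp
    have "(M *\<^sub>v z) $ i = (\<Sum>j\<in>{0..<n}. M $$ (i,j) * z $ j)"
      using i dz by (simp add: M_def scalar_prod_def)
    also have "\<dots> = (if xs!i = v then z $ i else lap V E (\<lambda>x. z $ ix x) (xs!i))"
    proof (cases "xs!i = v")
      case True
      have "(\<Sum>j\<in>{0..<n}. M $$ (i,j) * z $ j) = (\<Sum>j\<in>{0..<n}. if j = i then z $ j else 0)"
        using i True by (intro sum.cong) (auto simp: M_def)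
      also have "\<dots> = z $ i" using i by (simp add: sum.delta')
      finally show ?thesis using True by simp
    next
      case False
      let ?x = "xs ! i" let ?p = "\<lambda>x. z $ ix x"
      let ?h = "\<lambda>y. (if y = ?x then real (card (nbhd V E ?x)) else 0) * ?p y - (if E ?x y then ?p y else 0)"
      have "(\<Sum>j\<in>{0..<n}. M $$ (i,j) * z $ j) = (\<Sum>j\<in>{0..<n}. ?h (xs ! j))"
      proof (intro sum.cong refl)
        fix j assume j: "j \<in> {0..<n}"
        have "xs ! j = xs ! i \<longleftrightarrow> j = i" using j i xs(2) n_def nth_eq_iff_index_eq by auto
        thus "M $$ (i,j) * z $ j = ?h (xs ! j)" using j i False ixn[of j]
          by (auto simp: M_def algebra_simps)
      qed
      also have "\<dots> = (\<Sum>y\<in>V. ?h y)" by (rule reidx)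
      also have "\<dots> = (\<Sum>y\<in>V. (if y = ?x then real (card (nbhd V E ?x)) else 0) * ?p y) - (\<Sum>y\<in>V. if E ?x y then ?p y else 0)"
        by (rule sum_subtractf)
      also have "(\<Sum>y\<in>V. (if y = ?x then real (card (nbhd V E ?x)) else 0) * ?p y) = (\<Sum>y\<in>V. if y = ?x then real (card (nbhd V E ?x)) * ?p y else 0)"
        by (intro sum.cong) auto
      also have "\<dots> = real (card (nbhd V E ?x)) * ?p ?x"
        using fin i xs n_def nth_mem[of i xs] by (simp add: sum.delta')
      also have "real (card (nbhd V E ?x)) * ?p ?x - (\<Sum>y\<in>V. if E ?x y then ?p y else 0) = lap V E ?p ?x" by (simp add: lap_expand[OF g])
      finally show ?thesis using False by simp
    qed
    finally show ?thesis .
  qed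
  have "det M \<noteq> 0"
  proof
    assume "det M = 0"
    then obtain z where z: "z \<in> carrier_vec n" "z \<noteq> 0\<^sub>v n" "M *\<^sub>v z = 0\<^sub>v n"
      using det_0_iff_vec_prod_zero_field[OF Mc] by blast
    let ?p = "\<lambda>x. z $ ix x"
    have l0: "lap V E ?p x = 0" if "x \<in> V" "x \<noteq> v" for x
    proof -
      have "ix x < n" "xs ! ix x = x" using ix[OF that(1)] by auto
      thus ?thesis using Mv[OF z(1), of "ix x"] z(3) that(2) by simp
    qed
    have "lap V E ?p v = 0"
    proof -
      have "0 = (\<Sum>x\<in>V. lap V E ?p x)" using sum_lap[OF g] by simp
      also have "\<dots> = lap V E ?p v + (\<Sum>x\<in>V-{v}. lap V E ?p x)"
        using fin vV by (simp add: sum.remove)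
      also have "(\<Sum>x\<in>V-{v}. lap V E ?p x) = 0" using l0 by simp
      finally show ?thesis by simp
    qed
    hence harm: "\<And>x. x \<in> V \<Longrightarrow> lap V E ?p x = 0" using l0 by blast
    have pv: "?p v = 0"
      using Mv[OF z(1), of "ix v"] ix[OF vV] z(3) by simp
    have "z = 0\<^sub>v n"
    proof (rule eq_vecI)
      fix j assume "j < dim_vec (0\<^sub>v n)"
      hence j: "j < n" by simp
      have "xs ! j \<in> V" using j xs(1) n_def by auto
      hence "?p (xs ! j) = ?p v" using harmonic_const[OF g c harm _ vV] by blast
      thus "z $ j = 0\<^sub>v n $ j" using pv ixn[OF j] j by simp
    qed (use z(1) in simp)
    with z(2) show False by simp
  qed
  from det_non_zero_imp_unit[OF Mc this, of "()"]
  obtain B where B: "B \<in> carrier_mat n n" "M * B = 1\<^sub>m n"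
    by (auto simp: Units_def ring_mat_def)
  define bv where "bv = vec n (\<lambda>i. if xs!i = v then 0 else b (xs!i))"
  define z where "z = B *\<^sub>v bv"
  have bvc: "bv \<in> carrier_vec n" by (simp add: bv_def)
  have zc: "z \<in> carrier_vec n" using B(1) bvc by (simp add: z_def)
  have Mz: "M *\<^sub>v z = bv" unfolding z_def
    using assoc_mult_mat_vec[OF Mc B(1) bvc, symmetric] B(2) bvc by simp
  let ?p = "\<lambda>x. z $ ix x"
  have l1: "lap V E ?p x = b x" if "x \<in> V" "x \<noteq> v" for x
  proof -
    have "ix x < n" "xs ! ix x = x" using ix[OF that(1)] by auto
    thus ?thesis using Mv[OF zc, of "ix x"] Mz that(2) by (simp add: bv_def)
  qed
  have "lap V E ?p v = b v"
  proof -
    have "0 = (\<Sum>x\<in>V. lap V E ?p x)" using sum_lap[OF g] by simp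
    also have "\<dots> = lap V E ?p v + (\<Sum>x\<in>V-{v}. lap V E ?p x)"
      using fin vV by (simp add: sum.remove)
    also have "(\<Sum>x\<in>V-{v}. lap V E ?p x) = (\<Sum>x\<in>V-{v}. b x)" using l1 by simp
    also have "(\<Sum>x\<in>V-{v}. b x) = - b v" using b0 fin vV by (simp add: sum.remove)
    finally show ?thesis by simp
  qed
  thus ?thesis using l1 by blast
qed



lemma lap_diff: "lap V E (\<lambda>x. f x - h x) x = lap V E f x - lap V E h x"
  by (simp add: lap_def sum_subtractf[symmetric] algebra_simps)

lemma up_iff: "unit_potential V E u v f \<longleftrightarrow> (\<forall>w\<in>V. lap V E f w = (if w = u then 1 else if w = v then -1 else 0))"
  by (simp add: unit_potential_def lap_def)

lemma delta_sum:
  assumes "finite V" "u \<in> V" "v \<in> V" "u \<noteq> v"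
  shows "(\<Sum>x\<in>V. h x * (if x = u then 1 else if x = v then -1 else 0)) = h u - (h v :: real)"
proof -
  have "(\<Sum>x\<in>V. h x * (if x = u then 1 else if x = v then -1 else 0))
      = (\<Sum>x\<in>V. (if x = u then h x else 0) - (if x = v then h x else 0))"
    using assms(4) by (intro sum.cong) auto
  also have "\<dots> = h u - h v" using assms by (simp add: sum_subtractf sum.delta')
  finally show ?thesis .
qed

lemma up_exists:
  assumes g: "simple_graph V E" and c: "connected_on E V" and "u \<in> V" "v \<in> V" "u \<noteq> v"
  shows "\<exists>f. unit_potential V E u v f"
proof -
  have "(\<Sum>x\<in>V. (\<lambda>_. 1) x * (if x = u then 1 else if x = v then -1 else 0)) = (1::real) - 1"
    by (rule delta_sum) (use assms sg_fin[OF g] in auto)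
  hence "(\<Sum>x\<in>V. (if x = u then 1 else if x = v then -1 else 0::real)) = 0" by simp
  from exists_solution[OF g c assms(4) this] show ?thesis by (simp add: up_iff)
qed

lemma eff_res_eq:
  assumes g: "simple_graph V E" and c: "connected_on E V" and uv: "u \<in> V" "v \<in> V"
    and f: "unit_potential V E u v f"
  shows "eff_res V E u v = f u - f v"
  unfolding eff_res_def
proof (rule the_equality)
  show "\<exists>phi. unit_potential V E u v phi \<and> f u - f v = phi u - phi v" using f by blast
next
  fix r assume "\<exists>phi. unit_potential V E u v phi \<and> r = phi u - phi v"
  then obtain p where p: "unit_potential V E u v p" "r = p u - p v" by blast
  have "\<And>x. x \<in> V \<Longrightarrow> lap V E (\<lambda>x. p x - f x) x = 0"
    using p(1) f by (simp add: lap_diff up_iff)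
  from harmonic_const[OF g c this uv] show "r = f u - f v" using p(2) by simp
qed

lemma energy:
  assumes g: "simple_graph V E" and uv: "u \<in> V" "v \<in> V" "u \<noteq> v"
    and f: "unit_potential V E u v f"
  shows "(\<Sum>x\<in>V. \<Sum>y\<in>nbhd V E x. (f x - f y)^2) = 2 * (f u - f v)"
proof -
  have "(\<Sum>x\<in>V. \<Sum>y\<in>nbhd V E x. (f x - f y)^2) = 2 * (\<Sum>x\<in>V. f x * lap V E f x)"
    using green[OF g, of f f] by (simp add: power2_eq_square)
  also have "(\<Sum>x\<in>V. f x * lap V E f x) = (\<Sum>x\<in>V. f x * (if x = u then 1 else if x = v then -1 else 0))"
    using f by (intro sum.cong) (auto simp: up_iff)
  also have "\<dots> = f u - f v" by (rule delta_sum) (use assms sg_fin[OF g] in auto)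
  finally show ?thesis .
qed

lemma split_sum: "finite A \<Longrightarrow> B \<subseteq> A \<Longrightarrow> sum h A = sum h B + sum h (A - B)"
  by (simp add: sum.subset_diff add.commute)

lemma decomp:
  assumes g: "simple_graph V E" and e: "E u v"
    and f: "unit_potential V E u v f"
  defines "C \<equiv> nbhd V E u \<inter> nbhd V E v"
  defines "R \<equiv> f u - f v"
  defines "t \<equiv> \<lambda>x y. (f x - f y)^2"
  defines "A \<equiv> insert u (insert v C)"
  defines "K \<equiv> (\<Sum>w\<in>C. ((f u - f w) - (f w - f v))^2)
       + (\<Sum>y\<in>nbhd V E u - insert v C. t u y) + (\<Sum>y\<in>nbhd V E v - insert u C. t v y)
       + (\<Sum>w\<in>C. \<Sum>y\<in>nbhd V E w - {u,v}. t w y) + (\<Sum>x\<in>V - A. \<Sum>y\<in>nbhd V E x. t x y)"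
  shows "2 * R = (2 + real (card C)) * R^2 + K" "K \<ge> 0"
    "K = 0 \<Longrightarrow> (\<forall>x\<in>V - A. \<forall>y\<in>nbhd V E x. f x = f y) \<and> (\<forall>y\<in>nbhd V E u - insert v C. f u = f y)
       \<and> (\<forall>w\<in>C. 2 * (f u - f w) = R)"
proof -
  have fin: "finite V" by (rule sg_fin[OF g])
  have uV: "u \<in> V" and vV: "v \<in> V" using sg_in[OF g e] by auto
  have uv: "u \<noteq> v" using e sg_irr[OF g] by metis
  have finN: "\<And>x. finite (nbhd V E x)" by (rule fin_nbhd[OF g])
  have CV: "C \<subseteq> V" by (auto simp: C_def nbhd_def)
  have finC: "finite C" using CV fin finite_subset by blast
  have uC: "u \<notin> C" and vC: "v \<notin> C" using sg_irr[OF g] by (auto simp: C_def nbhd_def)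
  have AV: "A \<subseteq> V" using CV uV vV by (auto simp: A_def)
  let ?s = "\<lambda>x. \<Sum>y\<in>nbhd V E x. t x y"
  have tot: "(\<Sum>x\<in>V. ?s x) = 2 * R"
    using energy[OF g uV vV uv f] by (simp add: t_def R_def)
  have s1: "(\<Sum>x\<in>V. ?s x) = (\<Sum>x\<in>A. ?s x) + (\<Sum>x\<in>V - A. ?s x)"
    by (rule split_sum[OF fin AV])
  have s2: "(\<Sum>x\<in>A. ?s x) = ?s u + ?s v + (\<Sum>w\<in>C. ?s w)"
    using finC uC vC uv by (simp add: A_def)
  have Nu: "insert v C \<subseteq> nbhd V E u" using e vV by (auto simp: C_def nbhd_def)
  have Nv: "insert u C \<subseteq> nbhd V E v" using e uV sg_sym[OF g e] by (auto simp: C_def nbhd_def)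
  have su: "?s u = t u v + (\<Sum>w\<in>C. t u w) + (\<Sum>y\<in>nbhd V E u - insert v C. t u y)"
    using split_sum[OF finN Nu, of "t u"] finC vC by simp
  have sv: "?s v = t v u + (\<Sum>w\<in>C. t v w) + (\<Sum>y\<in>nbhd V E v - insert u C. t v y)"
    using split_sum[OF finN Nv, of "t v"] finC uC by simp
  have sw: "?s w = t w u + t w v + (\<Sum>y\<in>nbhd V E w - {u,v}. t w y)" if w: "w \<in> C" for w
  proof -
    have "{u,v} \<subseteq> nbhd V E w" using w uV vV sg_sym[OF g] by (auto simp: C_def nbhd_def)
    from split_sum[OF finN this, of "t w"] show ?thesis using uv by simp
  qed
  have q: "t u w + t v w + t w u + t w v = R^2 + ((f u - f w) - (f w - f v))^2" for w
    by (simp add: t_def R_def power2_eq_square algebra_simps)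
  have "2 * R = t u v + t v u + (\<Sum>w\<in>C. t u w + t v w + t w u + t w v)
       + (\<Sum>y\<in>nbhd V E u - insert v C. t u y) + (\<Sum>y\<in>nbhd V E v - insert u C. t v y)
       + (\<Sum>w\<in>C. \<Sum>y\<in>nbhd V E w - {u,v}. t w y) + (\<Sum>x\<in>V - A. ?s x)"
    using tot s1 s2 su sv sum.cong[OF refl sw, of C] by (simp add: sum.distrib algebra_simps)
  also have "(\<Sum>w\<in>C. t u w + t v w + t w u + t w v) = real (card C) * R^2 + (\<Sum>w\<in>C. ((f u - f w) - (f w - f v))^2)"
    by (simp add: q sum.distrib)
  also have "t u v + t v u = 2 * R^2" by (simp add: t_def R_def power2_eq_square algebra_simps)
  finally show "2 * R = (2 + real (card C)) * R^2 + K" by (simp add: K_def algebra_simps)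
  have n1: "(\<Sum>w\<in>C. ((f u - f w) - (f w - f v))^2) \<ge> 0" by (simp add: sum_nonneg)
  have n2: "(\<Sum>y\<in>nbhd V E u - insert v C. t u y) \<ge> 0" by (simp add: sum_nonneg t_def)
  have n3: "(\<Sum>y\<in>nbhd V E v - insert u C. t v y) \<ge> 0" by (simp add: sum_nonneg t_def)
  have n4: "(\<Sum>w\<in>C. \<Sum>y\<in>nbhd V E w - {u,v}. t w y) \<ge> 0" by (simp add: sum_nonneg t_def)
  have n5: "(\<Sum>x\<in>V - A. ?s x) \<ge> 0" by (simp add: sum_nonneg t_def)
  show "K \<ge> 0" using n1 n2 n3 n4 n5 by (simp add: K_def)
  assume "K = 0"
  hence z1: "(\<Sum>w\<in>C. ((f u - f w) - (f w - f v))^2) = 0"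
    and z2: "(\<Sum>y\<in>nbhd V E u - insert v C. t u y) = 0"
    and z5: "(\<Sum>x\<in>V - A. ?s x) = 0"
    using n1 n2 n3 n4 n5 unfolding K_def by linarith+
  have "\<forall>w\<in>C. ((f u - f w) - (f w - f v))^2 = 0"
    using z1 finC by (simp add: sum_nonneg_eq_0_iff)
  hence c1: "\<forall>w\<in>C. 2 * (f u - f w) = R" by (auto simp: R_def)
  have "\<forall>y\<in>nbhd V E u - insert v C. t u y = 0"
    using z2 finN by (subst (asm) sum_nonneg_eq_0_iff) (auto simp: t_def)
  hence c2: "\<forall>y\<in>nbhd V E u - insert v C. f u = f y" by (simp add: t_def)
  have "\<forall>x\<in>V - A. ?s x = 0"
    using z5 fin by (subst (asm) sum_nonneg_eq_0_iff) (auto simp: t_def intro: sum_nonneg)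
  hence "\<forall>x\<in>V - A. \<forall>y\<in>nbhd V E x. t x y = 0"
    using finN by (subst (asm) sum_nonneg_eq_0_iff) (auto simp: t_def sum_nonneg_eq_0_iff)
  hence c3: "\<forall>x\<in>V - A. \<forall>y\<in>nbhd V E x. f x = f y" by (simp add: t_def)
  show "(\<forall>x\<in>V - A. \<forall>y\<in>nbhd V E x. f x = f y) \<and> (\<forall>y\<in>nbhd V E u - insert v C. f u = f y)
       \<and> (\<forall>w\<in>C. 2 * (f u - f w) = R)" using c1 c2 c3 by blast
qed



lemma real_bound:
  fixes R c K :: real
  assumes "c \<ge> 0" "2 * R = (2 + c) * R^2 + K" "K \<ge> 0"
  shows "R \<le> 1 / (c / 2 + 1)"
proof (cases "R > 0")
  case True
  have "2 * R \<ge> (2 + c) * R * R" using assms by (simp add: power2_eq_square)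
  hence "2 \<ge> (2 + c) * R" using True by (simp add: mult.commute mult_le_cancel_left_pos)
  thus ?thesis using assms(1) by (simp add: field_simps)
next
  case False
  have "1 / (c / 2 + 1) > 0" using assms(1) by simp
  thus ?thesis using False by linarith
qed

lemma real_strict:
  fixes R c K :: real
  assumes "c \<ge> 0" "2 * R = (2 + c) * R^2 + K" "K \<ge> 0" "R \<ge> 1 / (c / 2 + 1)"
  shows "K = 0 \<and> R > 0"
proof -
  have "1 / (c / 2 + 1) > 0" using assms(1) by simp
  hence R0: "R > 0" using assms(4) by linarith
  have "R * (c/2 + 1) \<ge> 1" using assms(1,4) by (simp add: field_simps)
  hence "(2 + c) * R \<ge> 2" by (simp add: algebra_simps)
  hence "(2 + c) * R * R \<ge> 2 * R" using R0 by (simp add: mult_right_mono)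
  hence "K \<le> 0" using assms(2) by (simp add: power2_eq_square)
  thus ?thesis using assms(3) R0 by simp
qed

lemma nonclique:
  assumes g: "simple_graph V E" and c: "connected_on E B" and nc: "\<not> is_clique E B"
  shows "\<exists>x u v. x \<in> B \<and> u \<in> B \<and> v \<in> B \<and> E x u \<and> E u v \<and> x \<noteq> v \<and> \<not> E x v"
proof (rule ccontr)
  assume H: "\<not> ?thesis"
  have cl: "x = y \<or> E x y" if "x \<in> B" "y \<in> B" for x y
  proof -
    have "(\<lambda>a b. E a b \<and> a \<in> B \<and> b \<in> B)\<^sup>*\<^sup>* x y" using c that by (simp add: connected_on_def)
    thus ?thesis
      by (induction rule: rtranclp_induct) (use H that(1) in blast)+
  qed
  have "is_clique E B" unfolding is_clique_def using cl by blast
  with nc show False by simp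
qed



lemma decomp2:
  assumes g: "simple_graph V E" and e: "E u v" and f: "unit_potential V E u v f"
  shows "\<exists>K. 2 * (f u - f v) = (2 + real (card (nbhd V E u \<inter> nbhd V E v))) * (f u - f v)^2 + K \<and> K \<ge> 0 \<and>
    (K = 0 \<longrightarrow> (\<forall>x\<in>V - insert u (insert v (nbhd V E u \<inter> nbhd V E v)). \<forall>y\<in>nbhd V E x. f x = f y)
       \<and> (\<forall>y\<in>nbhd V E u - insert v (nbhd V E u \<inter> nbhd V E v). f u = f y)
       \<and> (\<forall>w\<in>nbhd V E u \<inter> nbhd V E v. 2 * (f u - f w) = f u - f v))"
  apply (rule exI, rule conjI, rule decomp(1)[OF g e f], rule conjI, rule decomp(2)[OF g e f], rule impI)
  apply (erule decomp(3)[OF g e f])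
  done

theorem mainTheorem5:
  fixes V :: "'a set" and E :: "'a \<Rightarrow> 'a \<Rightarrow> bool"
  assumes "simple_graph V E" and "V \<noteq> {}" and "connected_on E V"
  shows "(\<forall>u v. E u v \<longrightarrow>
            eff_res V E u v \<le> 1 / (real (card (nbhd V E u \<inter> nbhd V E v)) / 2 + 1))
       \<and> ((\<exists>B. is_block V E B \<and> \<not> is_clique E B) \<longrightarrow>
            (\<exists>u v. E u v \<and>
              eff_res V E u v < 1 / (real (card (nbhd V E u \<inter> nbhd V E v)) / 2 + 1)))"
proof
  note g = assms(1) and c = assms(3)
  show "\<forall>u v. E u v \<longrightarrow>
            eff_res V E u v \<le> 1 / (real (card (nbhd V E u \<inter> nbhd V E v)) / 2 + 1)"
  proof (intro allI impI)
    fix u v assume e: "E u v"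
    have uV: "u \<in> V" and vV: "v \<in> V" using sg_in[OF g e] by auto
    have uv: "u \<noteq> v" using e sg_irr[OF g] by metis
    obtain f where f: "unit_potential V E u v f" using up_exists[OF g c uV vV uv] by blast
    have r: "eff_res V E u v = f u - f v" by (rule eff_res_eq[OF g c uV vV f])
    from decomp2[OF g e f] show "eff_res V E u v \<le> 1 / (real (card (nbhd V E u \<inter> nbhd V E v)) / 2 + 1)"
      unfolding r by (metis real_bound of_nat_0_le_iff)
  qed
  show "(\<exists>B. is_block V E B \<and> \<not> is_clique E B) \<longrightarrow>
            (\<exists>u v. E u v \<and>
              eff_res V E u v < 1 / (real (card (nbhd V E u \<inter> nbhd V E v)) / 2 + 1))"
  proof
    assume "\<exists>B. is_block V E B \<and> \<not> is_clique E B"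
    then obtain B where B: "is_block V E B" "\<not> is_clique E B" by blast
    have BV: "B \<subseteq> V" and Bc: "connected_on E B" and Bn: "no_cut_vertex E B"
      using B(1) by (auto simp: is_block_def)
    obtain x u v where xuv: "x \<in> B" "u \<in> B" "v \<in> B" "E x u" "E u v" "x \<noteq> v" "\<not> E x v"
      using nonclique[OF g Bc B(2)] by blast
    have e: "E u v" by (rule xuv(5))
    have uV: "u \<in> V" and vV: "v \<in> V" using sg_in[OF g e] by auto
    have uv: "u \<noteq> v" using e sg_irr[OF g] by metis
    have xu: "x \<noteq> u" using xuv(4) sg_irr[OF g] by metis
    have ux: "E u x" using sg_sym[OF g xuv(4)] .
    have "connected_on E (B - {u})" using Bn xuv(2) by (simp add: no_cut_vertex_def)
    moreover have "x \<in> B - {u}" "v \<in> B - {u}" using xuv(1,3) xu uv by auto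
    ultimately have path: "(\<lambda>a b. E a b \<and> a \<in> B - {u} \<and> b \<in> B - {u})\<^sup>*\<^sup>* x v"
      unfolding connected_on_def by blast
    obtain f where f: "unit_potential V E u v f" using up_exists[OF g c uV vV uv] by blast
    have r: "eff_res V E u v = f u - f v" by (rule eff_res_eq[OF g c uV vV f])
    define C where "C = nbhd V E u \<inter> nbhd V E v"
    define A where "A = insert u (insert v C)"
    have "f u - f v < 1 / (real (card C) / 2 + 1)"
    proof (rule ccontr)
      assume "\<not> ?thesis"
      hence ge: "f u - f v \<ge> 1 / (real (card C) / 2 + 1)" by simp
      obtain K where D: "2 * (f u - f v) = (2 + real (card C)) * (f u - f v)^2 + K" "K \<ge> 0"
        "K = 0 \<Longrightarrow> (\<forall>x\<in>V - A. \<forall>y\<in>nbhd V E x. f x = f y) \<and> (\<forall>y\<in>nbhd V E u - insert v C. f u = f y)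
       \<and> (\<forall>w\<in>C. 2 * (f u - f w) = f u - f v)"
        using decomp2[OF g e f] unfolding A_def C_def by blast
      have "K = 0 \<and> f u - f v > 0" by (rule real_strict[OF _ D(1) D(2) ge]) simp
      hence K0: "K = 0" and R0: "f u - f v > 0" by auto
      from D(3)[OF K0] have
        c3: "\<forall>x\<in>V - A. \<forall>y\<in>nbhd V E x. f x = f y" and
        c2: "\<forall>y\<in>nbhd V E u - insert v C. f u = f y" and
        c1: "\<forall>w\<in>C. 2 * (f u - f w) = f u - f v"
        by blast+
      have xnA: "x \<notin> A" using xu xuv(6,7) sg_sym[OF g] by (auto simp: A_def C_def nbhd_def)
      have fx: "f x = f u" using c2 xnA ux sg_in[OF g ux] by (auto simp: A_def nbhd_def)
      have "f y = f u \<and> y \<notin> A" if "(\<lambda>a b. E a b \<and> a \<in> B - {u} \<and> b \<in> B - {u})\<^sup>*\<^sup>* x y" for y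
        using that
      proof (induction rule: rtranclp_induct)
        case base
        then show ?case using fx xnA by simp
      next
        case (step y z)
        have yz: "E y z" "z \<noteq> u" using step(2) by auto
        have yV: "y \<in> V" and zV: "z \<in> V" using sg_in[OF g yz(1)] by auto
        have fz: "f z = f u" using c3 step(3) yV zV yz(1) by (auto simp: nbhd_def)
        have "z \<noteq> v" using fz R0 by auto
        moreover have "z \<notin> C" using c1 fz R0 by force
        ultimately show ?case using fz yz(2) by (simp add: A_def)
      qed
      from this[OF path] show False by (simp add: A_def)
    qed
    hence "E u v \<and> eff_res V E u v < 1 / (real (card (nbhd V E u \<inter> nbhd V E v)) / 2 + 1)"
      using e r by (simp add: C_def)
    thus "\<exists>u v. E u v \<and>
              eff_res V E u v < 1 / (real (card (nbhd V E u \<inter> nbhd V E v)) / 2 + 1)"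
      by blast
  qed
qed

end
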